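(* Let $(G,c)$ be a W-state graph, and let $X$ and $X'$ be the vertex sets of the two connected components of the spanning subgraph $G_m=(V(G),E_m(G))$ of monochromatic edges. Then the set of bichromatic edges $E_b(G)$ equals the cut $\delta(X,X')$, the set of edges with one endpoint in $X$ and the other in $X'$.
   Context: Graphs may have parallel edges but no loops. A half-edge $2$-colouring $c$ of $G$ assigns to each pair $(e,w)$ with $w$ an endpoint of edge $e$ a colour in $\{0,1\}$ (0 = blue, 1 = red). An edge $e=uv$ is bichromatic if $c(e,u)\neq c(e,v)$ and monochromatic otherwise; $E_m(G)$, $E_b(G)$ denote the monochromatic and bichromatic edge sets; standing convention: monochromatic edges are blue at both ends. A graph is matching-covered if every edge lies in some perfect matching. A W-state graph is a half-edge $2$-coloured matching-covered graph $(G,c)$ in which every perfect matching contains exactly one bichromatic edge, and every vertex $v$ is incident with an edge $e$ with $c(e,v)=1$. For any W-state graph, $G_m$ has exactly two connected components, each factor-critical (a graph $F$ is factor-critical if $F-u$ has a perfect matching for every vertex $u$). *)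

theory Defs
  imports Main
begin

text \<open>A finite multigraph without loops: vertex set V, edge set E, and an
endpoint map ends; every edge has exactly two distinct endpoints in V.
Parallel edges are distinct elements of E with equal ends.\<close>
definition multigraph :: "'v set \<Rightarrow> 'e set \<Rightarrow> ('e \<Rightarrow> 'v set) \<Rightarrow> bool" where
  "multigraph V E ends \<longleftrightarrow> finite V \<and> finite E \<and>
     (\<forall>e\<in>E. ends e \<subseteq> V \<and> card (ends e) = 2)"

text \<open>Half-edge colouring c e w, with w an endpoint of e: False = 0 = blue, True = 1 = red.\<close>
definition bichromatic :: "('e \<Rightarrow> 'v set) \<Rightarrow> ('e \<Rightarrow> 'v \<Rightarrow> bool) \<Rightarrow> 'e \<Rightarrow> bool" where
  "bichromatic ends c e \<longleftrightarrow> (\<exists>u\<in>ends e. \<exists>v\<in>ends e. c e u \<noteq> c e v)"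

definition E_b :: "'e set \<Rightarrow> ('e \<Rightarrow> 'v set) \<Rightarrow> ('e \<Rightarrow> 'v \<Rightarrow> bool) \<Rightarrow> 'e set" where
  "E_b E ends c = {e\<in>E. bichromatic ends c e}"

definition E_m :: "'e set \<Rightarrow> ('e \<Rightarrow> 'v set) \<Rightarrow> ('e \<Rightarrow> 'v \<Rightarrow> bool) \<Rightarrow> 'e set" where
  "E_m E ends c = {e\<in>E. \<not> bichromatic ends c e}"

definition perfect_matching :: "'v set \<Rightarrow> 'e set \<Rightarrow> ('e \<Rightarrow> 'v set) \<Rightarrow> 'e set \<Rightarrow> bool" where
  "perfect_matching V E ends M \<longleftrightarrow> M \<subseteq> E \<and> (\<forall>v\<in>V. \<exists>!e. e \<in> M \<and> v \<in> ends e)"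

definition matching_covered :: "'v set \<Rightarrow> 'e set \<Rightarrow> ('e \<Rightarrow> 'v set) \<Rightarrow> bool" where
  "matching_covered V E ends \<longleftrightarrow>
     (\<forall>e\<in>E. \<exists>M. perfect_matching V E ends M \<and> e \<in> M)"

text \<open>W-state graph, including the standing convention that monochromatic edges
are blue at both ends.\<close>
definition W_state_graph :: "'v set \<Rightarrow> 'e set \<Rightarrow> ('e \<Rightarrow> 'v set) \<Rightarrow> ('e \<Rightarrow> 'v \<Rightarrow> bool) \<Rightarrow> bool" where
  "W_state_graph V E ends c \<longleftrightarrow>
     multigraph V E ends \<and> matching_covered V E ends \<and>
     (\<forall>e\<in>E_m E ends c. \<forall>w\<in>ends e. c e w = False) \<and>
     (\<forall>M. perfect_matching V E ends M \<longrightarrow> card (M \<inter> E_b E ends c) = 1) \<and>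
     (\<forall>v\<in>V. \<exists>e\<in>E. v \<in> ends e \<and> c e v = True)"

definition adj_in :: "'e set \<Rightarrow> ('e \<Rightarrow> 'v set) \<Rightarrow> ('v \<times> 'v) set" where
  "adj_in F ends = {(u, v). \<exists>e\<in>F. ends e = {u, v}}"

definition component_of :: "'v set \<Rightarrow> 'e set \<Rightarrow> ('e \<Rightarrow> 'v set) \<Rightarrow> 'v \<Rightarrow> 'v set" where
  "component_of V F ends v = {u. (v, u) \<in> (adj_in F ends)\<^sup>*}"

definition components :: "'v set \<Rightarrow> 'e set \<Rightarrow> ('e \<Rightarrow> 'v set) \<Rightarrow> 'v set set" where
  "components V F ends = component_of V F ends ` V"

definition cut :: "'e set \<Rightarrow> ('e \<Rightarrow> 'v set) \<Rightarrow> 'v set \<Rightarrow> 'v set \<Rightarrow> 'e set" where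
  "cut E ends X Y = {e\<in>E. \<exists>x\<in>X. \<exists>y\<in>Y. ends e = {x, y}}"

end

theory Submission
  imports Defs
begin

definition closedS :: "'e set \<Rightarrow> ('e \<Rightarrow> 'v set) \<Rightarrow> ('e \<Rightarrow> 'v \<Rightarrow> bool) \<Rightarrow> 'v set \<Rightarrow> bool" where
  "closedS E ends c S \<longleftrightarrow> (\<forall>g\<in>E_m E ends c. ends g \<subseteq> S \<or> ends g \<inter> S = {})"

lemma parity:
  assumes mg: "multigraph V E ends" and pm: "perfect_matching V E ends M"
    and one: "M \<inter> E_b E ends c = {e}" and TV: "T \<subseteq> V" and cl: "closedS E ends c T"
  shows "even (card T) \<longleftrightarrow> even (card (ends e \<inter> T))"
proof -
  have ME: "M \<subseteq> E" using pm unfolding perfect_matching_def by auto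
  have fE: "finite E" using mg unfolding multigraph_def by auto
  have fM: "finite M" using ME fE finite_subset by blast
  have eM: "e \<in> M" using one by auto
  have Tu: "T = (\<Union>g\<in>M. ends g \<inter> T)"
  proof
    show "T \<subseteq> (\<Union>g\<in>M. ends g \<inter> T)"
    proof
      fix v assume "v \<in> T"
      then have "v \<in> V" using TV by auto
      then obtain g where "g \<in> M" "v \<in> ends g" using pm unfolding perfect_matching_def by blast
      then show "v \<in> (\<Union>g\<in>M. ends g \<inter> T)" using \<open>v \<in> T\<close> by auto
    qed
  qed auto
  have fin: "\<forall>g\<in>M. finite (ends g \<inter> T)"
    using TV mg unfolding multigraph_def by (meson finite_Int finite_subset)
  have disj: "\<forall>g\<in>M. \<forall>h\<in>M. g \<noteq> h \<longrightarrow> (ends g \<inter> T) \<inter> (ends h \<inter> T) = {}"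
  proof (intro ballI impI)
    fix g h assume g: "g \<in> M" and h: "h \<in> M" and ne: "g \<noteq> h"
    show "(ends g \<inter> T) \<inter> (ends h \<inter> T) = {}"
    proof (rule ccontr)
      assume "(ends g \<inter> T) \<inter> (ends h \<inter> T) \<noteq> {}"
      then obtain v where v: "v \<in> ends g" "v \<in> ends h" "v \<in> T" by blast
      then have "v \<in> V" using TV by auto
      then have "\<exists>!e. e \<in> M \<and> v \<in> ends e" using pm unfolding perfect_matching_def by blast
      then show False using g h ne v by blast
    qed
  qed
  have "card T = (\<Sum>g\<in>M. card (ends g \<inter> T))"
    using card_UN_disjoint[OF fM fin disj] Tu by simp
  also have "\<dots> = card (ends e \<inter> T) + (\<Sum>g\<in>M-{e}. card (ends g \<inter> T))"
    using fM eM by (simp add: sum.remove)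
  finally have ct: "card T = card (ends e \<inter> T) + (\<Sum>g\<in>M-{e}. card (ends g \<inter> T))" .
  have "even (\<Sum>g\<in>M-{e}. card (ends g \<inter> T))"
  proof (rule dvd_sum)
    fix g assume g: "g \<in> M - {e}"
    then have "g \<in> E_m E ends c" using one ME unfolding E_m_def E_b_def by auto
    moreover have "card (ends g) = 2" using g ME mg unfolding multigraph_def by auto
    ultimately show "2 dvd card (ends g \<inter> T)" using cl unfolding closedS_def
      by (metis Int_absorb2 card.empty dvd_0_right dvd_refl)
  qed
  then show ?thesis using ct by simp
qed

lemma core:
  assumes W: "W_state_graph V E ends c"
    and ST: "S \<inter> T = {}" "S \<union> T = V" "T \<noteq> {}"
    and clS: "closedS E ends c S" and clT: "closedS E ends c T"
    and eb: "e \<in> E_b E ends c" and eS: "ends e \<subseteq> S"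
  shows False
proof -
  have mg: "multigraph V E ends" and mc: "matching_covered V E ends"
    and blue: "\<forall>e\<in>E_m E ends c. \<forall>w\<in>ends e. c e w = False"
    and pmone: "\<And>M. perfect_matching V E ends M \<Longrightarrow> card (M \<inter> E_b E ends c) = 1"
    and red: "\<forall>v\<in>V. \<exists>e\<in>E. v \<in> ends e \<and> c e v = True"
    using W unfolding W_state_graph_def by auto
  have TV: "T \<subseteq> V" using ST by auto
  have c2: "\<And>g. g \<in> E \<Longrightarrow> card (ends g) = 2" and eV: "\<And>g. g \<in> E \<Longrightarrow> ends g \<subseteq> V"
    using mg unfolding multigraph_def by auto
  have fE: "finite E" using mg unfolding multigraph_def by auto
  have oneb: "\<And>M f. perfect_matching V E ends M \<Longrightarrow> f \<in> M \<Longrightarrow> f \<in> E_b E ends c \<Longrightarrow> M \<inter> E_b E ends c = {f}"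
  proof -
    fix M f assume "perfect_matching V E ends M" "f \<in> M" "f \<in> E_b E ends c"
    then have "card (M \<inter> E_b E ends c) = 1" "f \<in> M \<inter> E_b E ends c" using pmone by auto
    then show "M \<inter> E_b E ends c = {f}" by (metis card_1_singletonE singletonD)
  qed
  have eE: "e \<in> E" using eb unfolding E_b_def by auto
  obtain M where M: "perfect_matching V E ends M" "e \<in> M" using mc eE unfolding matching_covered_def by blast
  have "ends e \<inter> T = {}" using eS ST by auto
  then have evT: "even (card T)" using parity[OF mg M(1) oneb[OF M eb] TV clT] by simp
  have side: "\<And>f. f \<in> E \<Longrightarrow> ends f \<subseteq> S \<or> ends f \<subseteq> T"
  proof -
    fix f assume fE: "f \<in> E"
    show "ends f \<subseteq> S \<or> ends f \<subseteq> T"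
    proof (rule ccontr)
      assume nn: "\<not> (ends f \<subseteq> S \<or> ends f \<subseteq> T)"
      obtain p q where pq: "ends f = {p, q}" "p \<noteq> q" using c2[OF fE] by (meson card_2_iff)
      have pqV: "p \<in> V" "q \<in> V" using eV[OF fE] pq by auto
      have mix: "(p \<in> S \<and> q \<in> T) \<or> (p \<in> T \<and> q \<in> S)" using nn pq pqV ST by auto
      have fnm: "f \<notin> E_m E ends c"
      proof
        assume "f \<in> E_m E ends c"
        then show False using clS mix pq ST unfolding closedS_def by auto
      qed
      then have fb: "f \<in> E_b E ends c" using fE unfolding E_m_def E_b_def by auto
      obtain M' where M': "perfect_matching V E ends M'" "f \<in> M'" using mc fE unfolding matching_covered_def by blast
      have "ends f \<inter> T = {q} \<or> ends f \<inter> T = {p}" using mix pq ST by auto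
      then have "card (ends f \<inter> T) = 1" by auto
      then show False using parity[OF mg M'(1) oneb[OF M' fb] TV clT] evT by simp
    qed
  qed
  obtain w where w: "w \<in> T" using ST by auto
  then obtain f where f: "f \<in> E" "w \<in> ends f" "c f w = True" using red TV by blast
  have fb: "f \<in> E_b E ends c"
  proof -
    have "f \<notin> E_m E ends c" using blue f by auto
    then show ?thesis using f unfolding E_m_def E_b_def by auto
  qed
  have fT: "ends f \<subseteq> T" using side[OF f(1)] f(2) w ST by auto
  obtain M' where M': "perfect_matching V E ends M'" "f \<in> M'" using mc f unfolding matching_covered_def by blast
  define N where "N = {g\<in>M. ends g \<subseteq> S} \<union> {g\<in>M'. ends g \<subseteq> T}"
  have ME: "M \<subseteq> E" "M' \<subseteq> E" using M M' unfolding perfect_matching_def by auto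
  have NE: "N \<subseteq> E" using ME unfolding N_def by auto
  have pmN: "perfect_matching V E ends N"
    unfolding perfect_matching_def
  proof (intro conjI NE ballI)
    fix v assume v: "v \<in> V"
    show "\<exists>!g. g \<in> N \<and> v \<in> ends g"
    proof (cases "v \<in> S")
      case True
      then have vT: "v \<notin> T" using ST by auto
      have ex1: "\<exists>!g. g \<in> M \<and> v \<in> ends g" using M(1) v unfolding perfect_matching_def by simp
      then obtain g where g0: "g \<in> M \<and> v \<in> ends g" and g3: "\<forall>h. h \<in> M \<and> v \<in> ends h \<longrightarrow> h = g"
        by (rule ex1E)
      have g: "g \<in> M" "v \<in> ends g" using g0 by auto
      have "ends g \<subseteq> S" using side[of g] g(1,2) ME True vT by auto
      then have gN: "g \<in> N" using g(1,2) unfolding N_def by auto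
      show ?thesis
      proof (rule ex1I[of _ g])
        show "g \<in> N \<and> v \<in> ends g" using gN g(1,2) by auto
        fix h assume "h \<in> N \<and> v \<in> ends h"
        then show "h = g" using g3 vT unfolding N_def by blast
      qed
    next
      case False
      then have vT: "v \<in> T" "v \<notin> S" using ST v by auto
      have ex1: "\<exists>!g. g \<in> M' \<and> v \<in> ends g" using M'(1) v unfolding perfect_matching_def by simp
      then obtain g where g0: "g \<in> M' \<and> v \<in> ends g" and g3: "\<forall>h. h \<in> M' \<and> v \<in> ends h \<longrightarrow> h = g"
        by (rule ex1E)
      have g: "g \<in> M'" "v \<in> ends g" using g0 by auto
      have "ends g \<subseteq> T" using side[of g] g(1,2) ME vT by auto
      then have gN: "g \<in> N" using g(1,2) unfolding N_def by auto
      show ?thesis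
      proof (rule ex1I[of _ g])
        show "g \<in> N \<and> v \<in> ends g" using gN g(1,2) by auto
        fix h assume "h \<in> N \<and> v \<in> ends h"
        then show "h = g" using g3 vT unfolding N_def by blast
      qed
    qed
  qed
  have ef: "e \<noteq> f"
  proof
    assume "e = f"
    then have "ends e \<subseteq> S \<inter> T" using eS fT by auto
    then have "ends e = {}" using ST by auto
    then show False using c2[OF eE] by simp
  qed
  have sub: "{e, f} \<subseteq> N \<inter> E_b E ends c" using M M' eS fT eb fb unfolding N_def by auto
  have "finite (N \<inter> E_b E ends c)" using NE fE finite_subset by blast
  then have "card {e, f} \<le> card (N \<inter> E_b E ends c)" using sub card_mono by blast
  then show False using pmone[OF pmN] ef by simp
qed

theorem mainTheorem9:
  fixes V :: "'v set" and E :: "'e set" and ends :: "'e \<Rightarrow> 'v set"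
    and c :: "'e \<Rightarrow> 'v \<Rightarrow> bool" and X X' :: "'v set"
  assumes "W_state_graph V E ends c"
    and "components V (E_m E ends c) ends = {X, X'}"
    and "X \<noteq> X'"
  shows "E_b E ends c = cut E ends X X'"
proof -
  let ?Em = "E_m E ends c"
  let ?R = "(adj_in ?Em ends)\<^sup>*"
  have mg: "multigraph V E ends" using assms(1) unfolding W_state_graph_def by auto
  have c2: "\<And>g. g \<in> E \<Longrightarrow> card (ends g) = 2" and eV: "\<And>g. g \<in> E \<Longrightarrow> ends g \<subseteq> V"
    using mg unfolding multigraph_def by auto
  have symA: "sym (adj_in ?Em ends)" unfolding sym_def adj_in_def by (auto simp: insert_commute)
  have symR: "sym ?R" using sym_rtrancl[OF symA] .
  obtain a where a: "a \<in> V" "X = component_of V ?Em ends a"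
    using assms(2) unfolding components_def by (metis imageE insertI1)
  obtain b where b: "b \<in> V" "X' = component_of V ?Em ends b"
    using assms(2) unfolding components_def by (metis imageE insertI1 insert_commute)
  have inV: "\<And>x y. (x, y) \<in> ?R \<Longrightarrow> x \<in> V \<Longrightarrow> y \<in> V"
  proof -
    fix x y assume "(x, y) \<in> ?R" "x \<in> V"
    then show "y \<in> V"
    proof (induction rule: rtrancl_induct)
      case (step y z)
      then obtain g where "g \<in> ?Em" "ends g = {y, z}" unfolding adj_in_def by auto
      then show ?case using eV unfolding E_m_def by auto
    qed auto
  qed
  have XV: "X \<subseteq> V" "X' \<subseteq> V" using a b inV unfolding component_of_def by auto
  have cov: "V \<subseteq> X \<union> X'"
  proof
    fix v assume v: "v \<in> V"
    then have "component_of V ?Em ends v \<in> {X, X'}" using assms(2) unfolding components_def by auto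
    moreover have "v \<in> component_of V ?Em ends v" unfolding component_of_def by auto
    ultimately show "v \<in> X \<union> X'" by auto
  qed
  have dis: "X \<inter> X' = {}"
  proof (rule ccontr)
    assume "X \<inter> X' \<noteq> {}"
    then obtain x where "(a, x) \<in> ?R" "(b, x) \<in> ?R" using a b unfolding component_of_def by auto
    then have ab: "(a, b) \<in> ?R" "(b, a) \<in> ?R" using symR unfolding sym_def
      by (meson rtrancl_trans)+
    have "X = X'" unfolding a(2) b(2) component_of_def using ab by (auto intro: rtrancl_trans)
    then show False using assms(3) by simp
  qed
  have clo: "\<And>z. closedS E ends c (component_of V ?Em ends z)"
    unfolding closedS_def
  proof
    fix z g assume g: "g \<in> ?Em"
    then obtain p q where pq: "ends g = {p, q}" using c2 unfolding E_m_def by (force simp: card_2_iff)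
    have "(p, q) \<in> adj_in ?Em ends" "(q, p) \<in> adj_in ?Em ends"
      using g pq unfolding adj_in_def by (auto simp: insert_commute)
    then have "(z, p) \<in> ?R \<longleftrightarrow> (z, q) \<in> ?R" by (meson rtrancl.rtrancl_into_rtrancl)
    then show "ends g \<subseteq> component_of V ?Em ends z \<or> ends g \<inter> component_of V ?Em ends z = {}"
      using pq unfolding component_of_def by auto
  qed
  have XX: "X \<noteq> {}" "X' \<noteq> {}" using a b unfolding component_of_def by auto
  show ?thesis
  proof
    show "E_b E ends c \<subseteq> cut E ends X X'"
    proof
      fix e assume eb: "e \<in> E_b E ends c"
      then have eE: "e \<in> E" unfolding E_b_def by auto
      obtain p q where pq: "ends e = {p, q}" using c2[OF eE] by (force simp: card_2_iff)
      have "p \<in> X \<union> X'" "q \<in> X \<union> X'" using pq eV[OF eE] cov by auto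
      moreover have "\<not> ends e \<subseteq> X"
        using core[OF assms(1) _ _ XX(2) _ _ eb, of X] dis cov XV clo a b by auto
      moreover have "\<not> ends e \<subseteq> X'"
        using core[OF assms(1) _ _ XX(1) _ _ eb, of X'] dis cov XV clo a b by auto
      ultimately have "(p \<in> X \<and> q \<in> X') \<or> (q \<in> X \<and> p \<in> X')" using pq by auto
      then show "e \<in> cut E ends X X'" using eE pq unfolding cut_def by (auto simp: insert_commute)
    qed
  next
    show "cut E ends X X' \<subseteq> E_b E ends c"
    proof
      fix e assume "e \<in> cut E ends X X'"
      then obtain x y where e: "e \<in> E" "x \<in> X" "y \<in> X'" "ends e = {x, y}" unfolding cut_def by auto
      show "e \<in> E_b E ends c"
      proof (rule ccontr)
        assume "e \<notin> E_b E ends c"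
        then have "e \<in> ?Em" using e unfolding E_b_def E_m_def by auto
        then show False using clo[of a] a e dis by (auto simp: closedS_def)
      qed
    qed
  qed
qed

end
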